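(* Let $(X,m)$ be a $\sigma$-finite measure space, $1<p<\infty$, $\eta>1$, and $\{T_t:t>0\}$ a one-parameter family of sublinear operators on $L^p(X,m)$ with $(x,t)\mapsto T_tf(x)$ measurable. Assume $\|\sup_{t>0}|T_tf|\|_{L^p(X,m)}\le C_p\|f\|_{L^p(X,m)}$ for all $f\in L^p(X,m)$, and $\lim_{t\to0+}T_tf(x)=f(x)$ $m$-a.e. for all $f$ in a dense subclass of $L^p(X,m)$. For $f\in L^p(X,m)$ and $\lambda>0$ let $$\mathcal E_\lambda=\Big\{(x,t)\in X\times(0,1/2):|T_tf(x)|>\lambda\log^{\frac{1-\eta}{p}}(1/t)\Big\}.$$ Then $$\frac{1}{\eta-1}\|f\|_{L^p}^p\le\lim_{\lambda\to\infty}\lambda^p\iint_{\mathcal E_\lambda}t^{-1}\log^{-\eta}(1/t)\,dt\,dm(x)\le\sup_{\lambda>0}\lambda^p\iint_{\mathcal E_\lambda}t^{-1}\log^{-\eta}(1/t)\,dt\,dm(x)\le\frac{C_p^p}{\eta-1}\|f\|_{L^p}^p,$$ where the limit exists.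
   Context: A family of operators is sublinear if $|T_t(f+h)|\le|T_tf|+|T_th|$ and $|T_t(cf)|=|c||T_tf|$. *)

theory Defs
  imports "HOL-Analysis.Analysis"
begin

definition Lp_set :: "'a measure \<Rightarrow> real \<Rightarrow> ('a \<Rightarrow> real) set" where
  "Lp_set M p = {f. f \<in> borel_measurable M \<and> integrable M (\<lambda>x. \<bar>f x\<bar> powr p)}"

definition Lp_norm_pow :: "'a measure \<Rightarrow> real \<Rightarrow> ('a \<Rightarrow> real) \<Rightarrow> real" where
  "Lp_norm_pow M p f = (\<integral>x. \<bar>f x\<bar> powr p \<partial>M)"

definition sublinear_family ::
  "'a measure \<Rightarrow> real \<Rightarrow> (real \<Rightarrow> ('a \<Rightarrow> real) \<Rightarrow> ('a \<Rightarrow> real)) \<Rightarrow> bool" where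
  "sublinear_family M p T \<longleftrightarrow>
     (\<forall>t>0. \<forall>f\<in>Lp_set M p. \<forall>h\<in>Lp_set M p. \<forall>x\<in>space M.
        \<bar>T t (\<lambda>y. f y + h y) x\<bar> \<le> \<bar>T t f x\<bar> + \<bar>T t h x\<bar>) \<and>
     (\<forall>t>0. \<forall>f\<in>Lp_set M p. \<forall>c::real. \<forall>x\<in>space M.
        \<bar>T t (\<lambda>y. c * f y) x\<bar> = \<bar>c\<bar> * \<bar>T t f x\<bar>)"

definition E_set ::
  "'a measure \<Rightarrow> real \<Rightarrow> real \<Rightarrow> (real \<Rightarrow> ('a \<Rightarrow> real) \<Rightarrow> ('a \<Rightarrow> real)) \<Rightarrow> ('a \<Rightarrow> real) \<Rightarrow> real
     \<Rightarrow> ('a \<times> real) set" where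
  "E_set M p \<eta> T f lam = {(x, t). x \<in> space M \<and> 0 < t \<and> t < 1/2 \<and>
      \<bar>T t f x\<bar> > lam * ln (1/t) powr ((1 - \<eta>) / p)}"

definition weighted_E ::
  "'a measure \<Rightarrow> real \<Rightarrow> real \<Rightarrow> (real \<Rightarrow> ('a \<Rightarrow> real) \<Rightarrow> ('a \<Rightarrow> real)) \<Rightarrow> ('a \<Rightarrow> real) \<Rightarrow> real
     \<Rightarrow> ennreal" where
  "weighted_E M p \<eta> T f lam = ennreal (lam powr p) *
     (\<integral>\<^sup>+ z. indicator (E_set M p \<eta> T f lam) z *
        ennreal (1 / (snd z * ln (1 / snd z) powr \<eta>)) \<partial>(M \<Otimes>\<^sub>M lborel))"

end

theory Submission
  imports Defs
begin

lemma int_w0: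
  fixes \<eta> c :: real
  assumes eta: "1 < \<eta>" and c: "0 < c" "c < 1"
  shows "set_integrable lborel (einterval 0 (ereal c)) (\<lambda>t. 1 / (t * (- ln t) powr \<eta>))"
     "(LBINT x=0..ereal c. 1 / (x * (- ln x) powr \<eta>)) = (- ln c) powr (1-\<eta>) / (\<eta>-1)"
proof -
  let ?f = "\<lambda>t. 1 / (t * (- ln t) powr \<eta>)"
  let ?F = "\<lambda>t. (- ln t) powr (1-\<eta>) / (\<eta>-1)"
  have lnpos: "0 < - ln t" if "0 < t" "t < c" for t
    using that c by simp
  have D: "(?F has_real_derivative ?f t) (at t)" if "0 < t" "t < c" for t
  proof -
    have "(?F has_real_derivative ((1-\<eta>) * (- ln t) powr (1-\<eta>-1) * (- (1/t)) / (\<eta>-1))) (at t)"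
      using that lnpos[OF that] eta
      by (auto intro!: derivative_eq_intros)
    also have "((1-\<eta>) * (- ln t) powr (1-\<eta>-1) * (- (1/t)) / (\<eta>-1)) = ?f t"
      using that lnpos[OF that] eta by (simp add: powr_diff powr_minus field_simps)
    finally show ?thesis .
  qed
  have A: "((?F \<circ> real_of_ereal) \<longlongrightarrow> 0) (at_right 0)"
  proof -
    have "filterlim (\<lambda>t. - ln t) at_top (at_right (0::real))"
      using filterlim_uminus_at_bot[THEN iffD1, OF ln_at_0] by simp
    then have "((\<lambda>t. (- ln t) powr (1-\<eta>)) \<longlongrightarrow> 0) (at_right (0::real))"
      using eta by (intro tendsto_neg_powr) auto
    then have "(?F \<longlongrightarrow> 0) (at_right (0::real))"
      by (rule tendsto_divide_zero)
    then show ?thesis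
      unfolding zero_ereal_def at_right_ereal filterlim_filtermap comp_def real_of_ereal.simps .
  qed
  have B: "((?F \<circ> real_of_ereal) \<longlongrightarrow> ?F c) (at_left (ereal c))"
    unfolding at_left_ereal filterlim_filtermap comp_def real_of_ereal.simps
    using c eta by (intro tendsto_intros) auto
  have cont: "isCont ?f t" if "0 < t" "t < c" for t
    using that lnpos[OF that] by (intro continuous_intros) auto
  have nn: "AE x in lborel. 0 < ereal x \<longrightarrow> ereal x < ereal c \<longrightarrow> 0 \<le> ?f x"
    by (rule AE_I2) simp
  have ab: "(0::ereal) < ereal c" using c by simp
  have D': "\<And>x. 0 < ereal x \<Longrightarrow> ereal x < ereal c \<Longrightarrow> (?F has_real_derivative ?f x) (at x)"
    using D by (simp add: zero_ereal_def)
  have cont': "\<And>x. 0 < ereal x \<Longrightarrow> ereal x < ereal c \<Longrightarrow> isCont ?f x"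
    using cont by (simp add: zero_ereal_def)
  note R = interval_integral_FTC_nonneg[OF ab D' cont' nn A B]
  show "set_integrable lborel (einterval 0 (ereal c)) ?f"
    by (rule R(1))
  show "(LBINT x=0..ereal c. ?f x) = (- ln c) powr (1-\<eta>) / (\<eta>-1)"
    using R(2) by simp
qed
lemma ln_one_div: "0 < t \<Longrightarrow> ln (1/t) = - ln (t::real)"
  by (simp add: ln_div)

lemma int_w:
  fixes \<eta> c :: real
  assumes eta: "1 < \<eta>" and c: "0 < c" "c < 1"
  shows "(\<integral>\<^sup>+t. indicator {0<..<c} t * ennreal (1 / (t * ln (1/t) powr \<eta>)) \<partial>lborel)
         = ennreal (ln (1/c) powr (1-\<eta>) / (\<eta>-1))"
proof -
  let ?f = "\<lambda>t. 1 / (t * (- ln t) powr \<eta>)"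
  note I = int_w0[OF eta c]
  have int: "integrable lborel (\<lambda>t. indicator {0<..<c} t * ?f t)"
    using I(1) by (simp add: set_integrable_def zero_ereal_def)
  have val: "(\<integral>t. indicator {0<..<c} t * ?f t \<partial>lborel) = (- ln c) powr (1-\<eta>) / (\<eta>-1)"
    using I(2) c by (simp add: interval_lebesgue_integral_def set_lebesgue_integral_def zero_ereal_def)
  have "(\<integral>\<^sup>+t. indicator {0<..<c} t * ennreal (1 / (t * ln (1/t) powr \<eta>)) \<partial>lborel)
      = (\<integral>\<^sup>+t. ennreal (indicator {0<..<c} t * ?f t) \<partial>lborel)"
    by (intro nn_integral_cong) (auto simp: indicator_def ln_one_div)
  also have "\<dots> = ennreal (\<integral>t. indicator {0<..<c} t * ?f t \<partial>lborel)"
    using c by (intro nn_integral_eq_integral int AE_I2) (auto simp: indicator_def)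
  also have "\<dots> = ennreal (ln (1/c) powr (1-\<eta>) / (\<eta>-1))"
    using val c by (simp add: ln_one_div)
  finally show ?thesis .
qed
definition wt :: "real \<Rightarrow> real \<Rightarrow> real" where
  "wt \<eta> t = 1 / (t * ln (1/t) powr \<eta>)"

definition wint :: "real \<Rightarrow> real set \<Rightarrow> ennreal" where
  "wint \<eta> S = (\<integral>\<^sup>+t. indicator S t * ennreal (wt \<eta> t) \<partial>lborel)"

definition Bset :: "real \<Rightarrow> real \<Rightarrow> real \<Rightarrow> real \<Rightarrow> real set" where
  "Bset p \<eta> s l = {t. 0 < t \<and> t < 1/2 \<and> s > l * ln (1/t) powr ((1-\<eta>)/p)}"

lemma wint_mono: "S \<subseteq> T \<Longrightarrow> wint \<eta> S \<le> wint \<eta> T"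
  unfolding wint_def by (intro nn_integral_mono mult_right_mono) (auto simp: indicator_def)

lemma powr_gt_iff_root:
  fixes u r q :: real
  assumes "0 < u" "0 < r" "0 < q"
  shows "r < u powr q \<longleftrightarrow> r powr (1/q) < u"
proof
  assume "r < u powr q"
  then have "r powr (1/q) < (u powr q) powr (1/q)"
    using assms by (intro powr_less_mono2) auto
  then show "r powr (1/q) < u" using assms by (simp add: powr_powr)
next
  assume "r powr (1/q) < u"
  then have "(r powr (1/q)) powr q < u powr q"
    using assms by (intro powr_less_mono2) auto
  then show "r < u powr q" using assms by (simp add: powr_powr)
qed

lemma Bset_char:
  fixes p \<eta> s l t :: real
  assumes p: "0 < p" and eta: "1 < \<eta>" and l: "0 < l" and s: "0 < s" and t: "0 < t" "t < 1/2"
  shows "s > l * ln (1/t) powr ((1-\<eta>)/p) \<longleftrightarrow> ln (1/t) > (l/s) powr (p/(\<eta>-1))"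
proof -
  define u where "u = ln (1/t)"
  have u: "0 < u" using t by (simp add: u_def)
  define q where "q = (\<eta>-1)/p"
  have q: "0 < q" using p eta by (simp add: q_def)
  have e: "(1-\<eta>)/p = - q" unfolding q_def by (simp add: minus_divide_left)
  have "s > l * u powr (-q) \<longleftrightarrow> l / s < u powr q"
    using u s l by (simp add: powr_minus field_simps)
  also have "\<dots> \<longleftrightarrow> (l/s) powr (1/q) < u"
    using u s l q by (intro powr_gt_iff_root) auto
  finally show ?thesis using p eta by (simp add: u_def e q_def)
qed
lemma Bset_eq:
  fixes p \<eta> s l :: real
  assumes p: "0 < p" and eta: "1 < \<eta>" and l: "0 < l" and s: "0 < s"
  shows "Bset p \<eta> s l = {0<..<min (1/2) (exp (- ((l/s) powr (p/(\<eta>-1)))))}"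
proof -
  have "t \<in> Bset p \<eta> s l \<longleftrightarrow> 0 < t \<and> t < min (1/2) (exp (- ((l/s) powr (p/(\<eta>-1)))))" for t
  proof (cases "0 < t \<and> t < 1/2")
    case True
    have e1: "t < exp (- ((l/s) powr (p/(\<eta>-1)))) \<longleftrightarrow> ln t < - ((l/s) powr (p/(\<eta>-1)))"
      using True by (metis exp_less_cancel_iff exp_ln)
    have e2: "t \<in> Bset p \<eta> s l \<longleftrightarrow> ln (1/t) > (l/s) powr (p/(\<eta>-1))"
    proof -
      have "t \<in> Bset p \<eta> s l \<longleftrightarrow> s > l * ln (1/t) powr ((1-\<eta>)/p)"
        unfolding Bset_def mem_Collect_eq using True by blast
      also have "\<dots> \<longleftrightarrow> ln (1/t) > (l/s) powr (p/(\<eta>-1))"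
        by (rule Bset_char[OF p eta l s]) (use True in auto)
      finally show ?thesis .
    qed
    have e3: "ln (1/t) = - ln t" using True by (simp add: ln_one_div)
    show ?thesis unfolding e2 e3 using e1 True by linarith
  next
    case False
    have "\<not> t \<in> Bset p \<eta> s l" using False unfolding Bset_def mem_Collect_eq by blast
    moreover have "\<not> (0 < t \<and> t < min (1/2) (exp (- ((l/s) powr (p/(\<eta>-1))))))"
      using False by (simp only: min_less_iff_conj) blast
    ultimately show ?thesis by blast
  qed
  then show ?thesis by (intro set_eqI) (simp only: greaterThanLessThan_iff)
qed

lemma Bset_nonpos: "s \<le> 0 \<Longrightarrow> 0 < l \<Longrightarrow> Bset p \<eta> s l = {}"
proof -
  assume "s \<le> 0" "0 < l"
  { fix t assume t: "0 < t" "t < 1/2" "s > l * ln (1/t) powr ((1-\<eta>)/p)"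
    have "0 \<le> l * ln (1/t) powr ((1-\<eta>)/p)" using \<open>0 < l\<close> by simp
    with t \<open>s \<le> 0\<close> have False by linarith }
  then show ?thesis by (auto simp: Bset_def)
qed

lemma wint_Bset:
  fixes p \<eta> s l :: real
  assumes p: "0 < p" and eta: "1 < \<eta>" and l: "0 < l" and s: "0 < s"
  defines "b \<equiv> (l/s) powr (p/(\<eta>-1))"
  shows "ennreal (l powr p) * wint \<eta> (Bset p \<eta> s l)
           = ennreal (l powr p * max (ln 2) b powr (1-\<eta>) / (\<eta>-1))"
proof -
  define c where "c = min (1/2) (exp (- b))"
  have c: "0 < c" "c < 1" by (auto simp: c_def)
  have iff: "exp (-b) \<le> 1/2 \<longleftrightarrow> ln 2 \<le> b"
  proof -
    have "exp (-b) \<le> 1/2 \<longleftrightarrow> exp (-b) \<le> exp (- ln 2)" by (simp add: exp_minus)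
    also have "\<dots> \<longleftrightarrow> ln 2 \<le> b" by simp
    finally show ?thesis .
  qed
  have lnc: "ln (1/c) = max (ln 2) b"
  proof (cases "ln 2 \<le> b")
    case True
    then have "c = exp (-b)" using iff by (simp add: c_def min_def)
    then show ?thesis using True by (simp add: ln_one_div max_def)
  next
    case False
    then have "c = 1/2" using iff by (simp add: c_def min_def)
    then show ?thesis using False by (simp add: max_def del: divide_const_simps)
  qed
  have "wint \<eta> (Bset p \<eta> s l) = ennreal (ln (1/c) powr (1-\<eta>) / (\<eta>-1))"
    unfolding wint_def wt_def Bset_eq[OF p eta l s] b_def[symmetric] c_def[symmetric]
    by (rule int_w[OF eta c])
  then show ?thesis using eta by (simp add: lnc ennreal_mult[symmetric] mult.assoc)
qed

lemma wint_Bset_le: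
  fixes p \<eta> s l :: real
  assumes p: "0 < p" and eta: "1 < \<eta>" and l: "0 < l" and s: "0 \<le> s"
  shows "ennreal (l powr p) * wint \<eta> (Bset p \<eta> s l) \<le> ennreal (s powr p / (\<eta>-1))"
proof (cases "s = 0")
  case True
  then show ?thesis using Bset_nonpos[of s l] l by (simp add: wint_def)
next
  case False
  then have s: "0 < s" using s by simp
  define b where "b = (l/s) powr (p/(\<eta>-1))"
  have b: "0 < b" using l s by (simp add: b_def)
  have "max (ln 2) b powr (1-\<eta>) \<le> b powr (1-\<eta>)"
    using b eta by (intro powr_mono2') auto
  also have "b powr (1-\<eta>) = (l/s) powr (-p)"
  proof -
    have "p/(\<eta>-1) * (1-\<eta>) = -p" using eta by (simp add: field_simps)
    then show ?thesis by (simp add: b_def powr_powr)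
  qed
  finally have "l powr p * max (ln 2) b powr (1-\<eta>) \<le> l powr p * (l/s) powr (-p)"
    by (intro mult_left_mono) auto
  also have "l powr p * (l/s) powr (-p) = s powr p"
    using l s by (simp add: powr_minus powr_divide field_simps)
  finally have "l powr p * max (ln 2) b powr (1-\<eta>) / (\<eta>-1) \<le> s powr p / (\<eta>-1)"
    using eta by (intro divide_right_mono) auto
  then show ?thesis unfolding wint_Bset[OF p eta l s] b_def[symmetric]
    by (intro ennreal_leI)
qed

lemma wint_Bset_eq:
  fixes p \<eta> s l :: real
  assumes p: "0 < p" and eta: "1 < \<eta>" and l: "0 < l" and s: "0 < s"
    and big: "ln 2 \<le> (l/s) powr (p/(\<eta>-1))"
  shows "ennreal (l powr p) * wint \<eta> (Bset p \<eta> s l) = ennreal (s powr p / (\<eta>-1))"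
proof -
  define b where "b = (l/s) powr (p/(\<eta>-1))"
  have b: "0 < b" using l s by (simp add: b_def)
  have "max (ln 2) b = b" using big by (simp add: b_def)
  moreover have "b powr (1-\<eta>) = (l/s) powr (-p)"
  proof -
    have "p/(\<eta>-1) * (1-\<eta>) = -p" using eta by (simp add: field_simps)
    then show ?thesis by (simp add: b_def powr_powr)
  qed
  moreover have "l powr p * (l/s) powr (-p) = s powr p"
    using l s by (simp add: powr_minus powr_divide field_simps)
  ultimately show ?thesis unfolding wint_Bset[OF p eta l s] b_def[symmetric]
    by simp
qed
definition Aset :: "real \<Rightarrow> real \<Rightarrow> (real \<Rightarrow> real) \<Rightarrow> real \<Rightarrow> real set" where
  "Aset p \<eta> \<phi> l = {t. 0 < t \<and> t < 1/2 \<and> \<phi> t > l * ln (1/t) powr ((1-\<eta>)/p)}"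

lemma wint_mono_AE: "AE t in lborel. t \<in> S \<longrightarrow> t \<in> T \<Longrightarrow> wint \<eta> S \<le> wint \<eta> T"
  unfolding wint_def by (intro nn_integral_mono_AE) (auto simp: indicator_def elim!: eventually_mono)

lemma choose_eps_lt:
  fixes g :: "real \<Rightarrow> real"
  assumes "(g \<longlongrightarrow> g0) (at_right 0)" "g0 < y" "0 < e0"
  shows "\<exists>\<epsilon>>0. \<epsilon> < e0 \<and> g \<epsilon> < y"
proof -
  have "eventually (\<lambda>\<epsilon>. g \<epsilon> < y) (at_right 0)"
    using order_tendstoD(2)[OF assms(1,2)] .
  moreover have "eventually (\<lambda>\<epsilon>. \<epsilon> < e0) (at_right (0::real))"
    using assms(3) eventually_at_right_field by blast
  ultimately have "eventually (\<lambda>\<epsilon>. g \<epsilon> < y \<and> \<epsilon> < e0) (at_right (0::real))"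
    by (rule eventually_conj)
  then obtain b where b: "b > 0" "\<And>x. x > 0 \<Longrightarrow> x < b \<Longrightarrow> g x < y \<and> x < e0"
    unfolding eventually_at_right_field by auto
  show ?thesis using b(2)[of "b/2"] b(1) by (intro exI[of _ "b/2"]) auto
qed

lemma choose_eps_gt:
  fixes g :: "real \<Rightarrow> real"
  assumes "(g \<longlongrightarrow> g0) (at_right 0)" "y < g0" "0 < e0"
  shows "\<exists>\<epsilon>>0. \<epsilon> < e0 \<and> y < g \<epsilon>"
proof -
  have "eventually (\<lambda>\<epsilon>. y < g \<epsilon>) (at_right 0)"
    using order_tendstoD(1)[OF assms(1,2)] .
  moreover have "eventually (\<lambda>\<epsilon>. \<epsilon> < e0) (at_right (0::real))"
    using assms(3) eventually_at_right_field by blast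
  ultimately have "eventually (\<lambda>\<epsilon>. y < g \<epsilon> \<and> \<epsilon> < e0) (at_right (0::real))"
    by (rule eventually_conj)
  then obtain b where b: "b > 0" "\<And>x. x > 0 \<Longrightarrow> x < b \<Longrightarrow> y < g x \<and> x < e0"
    unfolding eventually_at_right_field by auto
  show ?thesis using b(2)[of "b/2"] b(1) by (intro exI[of _ "b/2"]) auto
qed

lemma Phi_bound:
  fixes p \<eta> l :: real and \<phi> :: "real \<Rightarrow> real" and S :: ennreal
  assumes p: "0 < p" and eta: "1 < \<eta>" and l: "0 < l"
    and S: "\<And>t. 0 < t \<Longrightarrow> ennreal (\<bar>\<phi> t\<bar> powr p) \<le> S"
  shows "ennreal (l powr p) * wint \<eta> (Aset p \<eta> \<phi> l) \<le> ennreal (1/(\<eta>-1)) * S"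
proof (cases S)
  case top
  have "ennreal (1/(\<eta>-1)) \<noteq> 0" using eta by simp
  then show ?thesis using top by (simp add: ennreal_mult_top)
next
  case (real s)
  define \<sigma> where "\<sigma> = s powr (1/p)"
  have s0: "0 \<le> s" using real by simp
  have phi: "\<phi> t \<le> \<sigma>" if "0 < t" for t
  proof -
    have "\<bar>\<phi> t\<bar> powr p \<le> s" using S[OF that] real s0 by simp
    then have "(\<bar>\<phi> t\<bar> powr p) powr (1/p) \<le> s powr (1/p)"
      using p by (intro powr_mono2) auto
    then have "\<bar>\<phi> t\<bar> \<le> \<sigma>" using p by (simp add: powr_powr \<sigma>_def)
    then show ?thesis by simp
  qed
  have sub: "Aset p \<eta> \<phi> l \<subseteq> Bset p \<eta> \<sigma> l"
    unfolding Aset_def Bset_def using phi by (auto intro: less_le_trans)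
  have "ennreal (l powr p) * wint \<eta> (Aset p \<eta> \<phi> l) \<le> ennreal (l powr p) * wint \<eta> (Bset p \<eta> \<sigma> l)"
    by (intro mult_left_mono wint_mono sub) auto
  also have "\<dots> \<le> ennreal (\<sigma> powr p / (\<eta>-1))"
    using p eta l by (intro wint_Bset_le) (auto simp: \<sigma>_def)
  also have "\<sigma> powr p = s" using p s0 by (simp add: \<sigma>_def powr_powr)
  also have "ennreal (s / (\<eta>-1)) = ennreal (1/(\<eta>-1)) * S"
    using real s0 eta by (simp add: ennreal_mult[symmetric])
  finally show ?thesis .
qed
lemma ln_inv_mono:
  fixes \<delta> t :: real
  assumes "0 < \<delta>" "\<delta> \<le> t"
  shows "ln (1/t) \<le> ln (1/\<delta>)"
  using assms by (simp add: ln_one_div)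

lemma Phi_upper_ev:
  fixes p \<eta> a \<epsilon> K :: real and \<phi> :: "real \<Rightarrow> real"
  assumes p: "0 < p" and eta: "1 < \<eta>" and eps: "0 < \<epsilon>"
    and lim: "(\<phi> \<longlongrightarrow> a) (at_right 0)"
    and K: "AE t in lborel. 0 < t \<and> t < 1/2 \<longrightarrow> \<phi> t \<le> K"
  shows "eventually (\<lambda>l. ennreal (l powr p) * wint \<eta> (Aset p \<eta> \<phi> l) \<le> ennreal ((a+\<epsilon>) powr p / (\<eta>-1))) at_top"
proof -
  have "eventually (\<lambda>t. dist (\<phi> t) a < \<epsilon>) (at_right 0)"
    using tendstoD[OF lim eps] .
  then obtain b where b: "b > 0" "\<And>t. t > 0 \<Longrightarrow> t < b \<Longrightarrow> dist (\<phi> t) a < \<epsilon>"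
    unfolding eventually_at_right_field by auto
  define \<delta> where "\<delta> = min b (1/2)"
  have d: "0 < \<delta>" "\<delta> \<le> 1/2" "\<delta> \<le> b" using b by (auto simp: \<delta>_def)
  have lnd: "0 < ln (1/\<delta>)" using d by (simp add: ln_one_div)
  define Kp where "Kp = max K 0"
  define e where "e = (1-\<eta>)/p"
  have e: "e \<le> 0" using p eta by (simp add: e_def divide_nonpos_pos)
  define L0 where "L0 = Kp * ln (1/\<delta>) powr (-e)"
  have "eventually (\<lambda>l. l > max L0 0) at_top" by (rule eventually_gt_at_top)
  then show ?thesis
  proof eventually_elim
    fix l assume "l > max L0 0"
    then have l: "0 < l" "l > L0" by auto
    have lK: "l * ln (1/\<delta>) powr e > Kp"
    proof -
      have "Kp = L0 * ln (1/\<delta>) powr e"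
        using lnd by (simp add: L0_def mult.assoc powr_add[symmetric])
      also have "\<dots> < l * ln (1/\<delta>) powr e"
        using l lnd by (intro mult_strict_right_mono) auto
      finally show ?thesis .
    qed
    have "AE t in lborel. t \<in> Aset p \<eta> \<phi> l \<longrightarrow> t \<in> Bset p \<eta> (a+\<epsilon>) l"
      using K
    proof eventually_elim
      fix t assume hK: "0 < t \<and> t < 1/2 \<longrightarrow> \<phi> t \<le> K"
      show "t \<in> Aset p \<eta> \<phi> l \<longrightarrow> t \<in> Bset p \<eta> (a+\<epsilon>) l"
      proof
        assume "t \<in> Aset p \<eta> \<phi> l"
        then have t: "0 < t" "t < 1/2" and gt: "\<phi> t > l * ln (1/t) powr e"
          unfolding Aset_def e_def by auto
        show "t \<in> Bset p \<eta> (a+\<epsilon>) l"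
        proof (cases "t < \<delta>")
          case True
          then have "dist (\<phi> t) a < \<epsilon>" using b(2)[OF t(1)] d by auto
          then have "\<phi> t < a + \<epsilon>" by (simp add: dist_real_def abs_less_iff)
          then show ?thesis using t gt unfolding Bset_def e_def by auto
        next
          case False
          then have "ln (1/t) \<le> ln (1/\<delta>)" using d by (intro ln_inv_mono) auto
          moreover have "0 < ln (1/t)" using t by (simp add: ln_one_div)
          ultimately have "ln (1/\<delta>) powr e \<le> ln (1/t) powr e"
            using e by (intro powr_mono2') auto
          then have "l * ln (1/\<delta>) powr e \<le> l * ln (1/t) powr e"
            using l by (intro mult_left_mono) auto
          then have "\<phi> t > Kp" using lK gt by linarith
          moreover have "\<phi> t \<le> Kp" using hK t by (simp add: Kp_def)
          ultimately show ?thesis by linarith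
        qed
      qed
    qed
    then have "ennreal (l powr p) * wint \<eta> (Aset p \<eta> \<phi> l) \<le> ennreal (l powr p) * wint \<eta> (Bset p \<eta> (a+\<epsilon>) l)"
      by (intro mult_left_mono wint_mono_AE) auto
    also have "\<dots> \<le> ennreal ((a+\<epsilon>) powr p / (\<eta>-1))"
    proof (cases "0 \<le> a + \<epsilon>")
      case True
      then show ?thesis using p eta l by (intro wint_Bset_le) auto
    next
      case False
      then have "Bset p \<eta> (a+\<epsilon>) l = {}" using l by (intro Bset_nonpos) auto
      then show ?thesis by (simp add: wint_def)
    qed
    finally show "ennreal (l powr p) * wint \<eta> (Aset p \<eta> \<phi> l) \<le> ennreal ((a+\<epsilon>) powr p / (\<eta>-1))" .
  qed
qed

lemma Phi_lower_ev:
  fixes p \<eta> a \<epsilon> :: real and \<phi> :: "real \<Rightarrow> real"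
  assumes p: "0 < p" and eta: "1 < \<eta>" and eps: "0 < \<epsilon>" "\<epsilon> < a"
    and lim: "(\<phi> \<longlongrightarrow> a) (at_right 0)"
  shows "eventually (\<lambda>l. ennreal ((a-\<epsilon>) powr p / (\<eta>-1)) \<le> ennreal (l powr p) * wint \<eta> (Aset p \<eta> \<phi> l)) at_top"
proof -
  have "eventually (\<lambda>t. dist (\<phi> t) a < \<epsilon>) (at_right 0)"
    using tendstoD[OF lim eps(1)] .
  then obtain b where b: "b > 0" "\<And>t. t > 0 \<Longrightarrow> t < b \<Longrightarrow> dist (\<phi> t) a < \<epsilon>"
    unfolding eventually_at_right_field by auto
  define \<delta> where "\<delta> = min b (1/2)"
  have d: "0 < \<delta>" "\<delta> \<le> 1/2" "\<delta> \<le> b" using b by (auto simp: \<delta>_def)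
  have lnd: "0 < ln (1/\<delta>)" using d by (simp add: ln_one_div)
  have ln2: "ln 2 \<le> ln (1/\<delta>)" using ln_inv_mono[OF d(1) d(2)] by simp
  define s where "s = a - \<epsilon>"
  have s: "0 < s" using eps by (simp add: s_def)
  define L0 where "L0 = s * ln (1/\<delta>) powr ((\<eta>-1)/p)"
  have "eventually (\<lambda>l. l > max L0 0) at_top" by (rule eventually_gt_at_top)
  then show ?thesis
  proof eventually_elim
    fix l assume "l > max L0 0"
    then have l: "0 < l" "l > L0" by auto
    have big: "ln (1/\<delta>) \<le> (l/s) powr (p/(\<eta>-1))"
    proof -
      have "ln (1/\<delta>) powr ((\<eta>-1)/p) \<le> l/s" using l s by (simp add: L0_def field_simps)
      then have "(ln (1/\<delta>) powr ((\<eta>-1)/p)) powr (p/(\<eta>-1)) \<le> (l/s) powr (p/(\<eta>-1))"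
        using p eta by (intro powr_mono2) auto
      then show ?thesis using p eta lnd by (simp add: powr_powr)
    qed
    have sub: "Bset p \<eta> s l \<subseteq> Aset p \<eta> \<phi> l"
    proof
      fix t assume tB: "t \<in> Bset p \<eta> s l"
      then have t: "0 < t" "t < 1/2" and gt: "s > l * ln (1/t) powr ((1-\<eta>)/p)"
        unfolding Bset_def by auto
      have "ln (1/t) > (l/s) powr (p/(\<eta>-1))" using Bset_char[OF p eta l(1) s t] gt by simp
      then have "ln (1/t) > ln (1/\<delta>)" using big by linarith
      then have "t < \<delta>" using t d by (simp add: ln_one_div)
      then have "dist (\<phi> t) a < \<epsilon>" using b(2)[OF t(1)] d by auto
      then have "\<phi> t > s" by (simp add: dist_real_def abs_less_iff s_def)
      then show "t \<in> Aset p \<eta> \<phi> l" using t gt unfolding Aset_def by auto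
    qed
    have "ennreal (s powr p / (\<eta>-1)) = ennreal (l powr p) * wint \<eta> (Bset p \<eta> s l)"
      using wint_Bset_eq[OF p eta l(1) s] ln2 big by simp
    also have "\<dots> \<le> ennreal (l powr p) * wint \<eta> (Aset p \<eta> \<phi> l)"
      by (intro mult_left_mono wint_mono sub) auto
    finally show "ennreal ((a-\<epsilon>) powr p / (\<eta>-1)) \<le> ennreal (l powr p) * wint \<eta> (Aset p \<eta> \<phi> l)"
      by (simp add: s_def)
  qed
qed
lemma Phi_lim:
  fixes p \<eta> a K :: real and \<phi> :: "real \<Rightarrow> real"
  assumes p: "0 < p" and eta: "1 < \<eta>" and a: "0 \<le> a"
    and lim: "(\<phi> \<longlongrightarrow> a) (at_right 0)"
    and K: "AE t in lborel. 0 < t \<and> t < 1/2 \<longrightarrow> \<phi> t \<le> K"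
  shows "((\<lambda>l. ennreal (l powr p) * wint \<eta> (Aset p \<eta> \<phi> l)) \<longlongrightarrow> ennreal (a powr p / (\<eta>-1))) at_top"
proof (rule order_tendstoI)
  fix y assume y: "y < ennreal (a powr p / (\<eta>-1))"
  then have "y \<noteq> top" by (auto simp: top_unique)
  then obtain y' where y': "y = ennreal y'" "0 \<le> y'" by (cases y) auto
  have y'lt: "y' < a powr p / (\<eta>-1)" using y y' by (simp add: ennreal_less_iff)
  have apos: "0 < a"
  proof (rule ccontr)
    assume "\<not> 0 < a" then have "a = 0" using a by simp
    then show False using y'lt y' by simp
  qed
  have glim: "((\<lambda>\<epsilon>. (a-\<epsilon>) powr p / (\<eta>-1)) \<longlongrightarrow> a powr p / (\<eta>-1)) (at_right 0)"
  proof -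
    have "((\<lambda>\<epsilon>::real. a - \<epsilon>) \<longlongrightarrow> a - 0) (at_right 0)"
      by (intro tendsto_diff tendsto_const tendsto_ident_at)
    then have "((\<lambda>\<epsilon>::real. (a - \<epsilon>) powr p) \<longlongrightarrow> a powr p) (at_right 0)"
      using apos by (intro tendsto_powr tendsto_const) auto
    then show ?thesis by (intro tendsto_divide tendsto_const) (use eta in auto)
  qed
  obtain \<epsilon> where eps: "\<epsilon> > 0" "\<epsilon> < a" "y' < (a-\<epsilon>) powr p / (\<eta>-1)"
    using choose_eps_gt[OF glim y'lt apos] by auto
  show "eventually (\<lambda>l. y < ennreal (l powr p) * wint \<eta> (Aset p \<eta> \<phi> l)) at_top"
    using Phi_lower_ev[OF p eta eps(1,2) lim]
  proof eventually_elim
    fix l assume "ennreal ((a-\<epsilon>) powr p / (\<eta>-1)) \<le> ennreal (l powr p) * wint \<eta> (Aset p \<eta> \<phi> l)"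
    moreover have "y < ennreal ((a-\<epsilon>) powr p / (\<eta>-1))"
      unfolding y'(1) using eps y'(2) by (intro ennreal_lessI) auto
    ultimately show "y < ennreal (l powr p) * wint \<eta> (Aset p \<eta> \<phi> l)" by (rule less_le_trans[rotated])
  qed
next
  fix y assume y: "ennreal (a powr p / (\<eta>-1)) < y"
  show "eventually (\<lambda>l. ennreal (l powr p) * wint \<eta> (Aset p \<eta> \<phi> l) < y) at_top"
  proof (cases "y = top")
    case True
    show ?thesis using Phi_upper_ev[OF p eta zero_less_one lim K]
      by eventually_elim (use True in \<open>auto simp: top_unique intro: le_less_trans\<close>)
  next
    case False
    then obtain y' where y': "y = ennreal y'" "0 \<le> y'" by (cases y) auto
    have nn: "0 \<le> a powr p / (\<eta>-1)" using eta by simp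
    have y'gt: "a powr p / (\<eta>-1) < y'" using y y' ennreal_less_iff[OF nn] by simp
    have glim: "((\<lambda>\<epsilon>. (a+\<epsilon>) powr p / (\<eta>-1)) \<longlongrightarrow> a powr p / (\<eta>-1)) (at_right 0)"
    proof -
      have ev: "eventually (\<lambda>\<epsilon>. 0 \<le> a + \<epsilon>) (at_right (0::real))"
        using a eventually_at_right_field[of "\<lambda>\<epsilon>. 0 \<le> a + \<epsilon>" 0] by (auto intro!: exI[of _ 1])
      have "((\<lambda>\<epsilon>. (a+\<epsilon>) powr p) \<longlongrightarrow> (a+0) powr p) (at_right 0)"
      proof (rule tendsto_powr2[OF _ tendsto_const ev])
        show "((\<lambda>\<epsilon>::real. a + \<epsilon>) \<longlongrightarrow> a + 0) (at_right 0)"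
          by (intro tendsto_add tendsto_const tendsto_ident_at)
      qed (use p in auto)
      then show ?thesis by (intro tendsto_divide tendsto_const) (use eta in auto)
    qed
    obtain \<epsilon> where eps: "\<epsilon> > 0" "(a+\<epsilon>) powr p / (\<eta>-1) < y'"
      using choose_eps_lt[OF glim y'gt zero_less_one] by auto
    show ?thesis using Phi_upper_ev[OF p eta eps(1) lim K]
    proof eventually_elim
      fix l assume "ennreal (l powr p) * wint \<eta> (Aset p \<eta> \<phi> l) \<le> ennreal ((a+\<epsilon>) powr p / (\<eta>-1))"
      moreover have "ennreal ((a+\<epsilon>) powr p / (\<eta>-1)) < y"
        unfolding y'(1) using eps y'gt nn by (intro ennreal_lessI) auto
      ultimately show "ennreal (l powr p) * wint \<eta> (Aset p \<eta> \<phi> l) < y" by (rule le_less_trans)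
    qed
  qed
qed
definition kk :: "(real \<Rightarrow> ('a \<Rightarrow> real) \<Rightarrow> ('a \<Rightarrow> real)) \<Rightarrow> ('a \<Rightarrow> real) \<Rightarrow> 'a \<times> real \<Rightarrow> real" where
  "kk T g z = T (if 0 < snd z then snd z else 1) g (fst z)"

lemma kk_meas:
  assumes "(\<lambda>(x, t). T t g x) \<in> borel_measurable (M \<Otimes>\<^sub>M restrict_space lborel {0<..})"
  shows "kk T g \<in> borel_measurable (M \<Otimes>\<^sub>M lborel)"
proof -
  have psi: "(\<lambda>z. (fst z, if 0 < snd z then snd z else (1::real))) \<in> measurable (M \<Otimes>\<^sub>M lborel) (M \<Otimes>\<^sub>M restrict_space lborel {0<..})"
  proof (rule measurable_Pair)
    show "(\<lambda>z. if 0 < snd z then snd z else (1::real)) \<in> measurable (M \<Otimes>\<^sub>M lborel) (restrict_space lborel {0<..})"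
    proof (rule measurable_restrict_space2)
      show "(\<lambda>z. if 0 < snd z then snd z else (1::real)) \<in> measurable (M \<Otimes>\<^sub>M lborel) lborel"
        unfolding measurable_lborel2 by measurable
    qed auto
  qed measurable
  show ?thesis using measurable_comp[OF psi assms] unfolding kk_def[abs_def] by (simp add: comp_def case_prod_beta)
qed

lemma E_set_eq:
  "E_set M p \<eta> T g l = {z \<in> space (M \<Otimes>\<^sub>M lborel). 0 < snd z \<and> snd z < 1/2 \<and>
      \<bar>kk T g z\<bar> > l * ln (1 / snd z) powr ((1-\<eta>)/p)}"
  by (auto simp: E_set_def kk_def space_pair_measure)

lemma E_set_meas:
  assumes "(\<lambda>(x, t). T t g x) \<in> borel_measurable (M \<Otimes>\<^sub>M restrict_space lborel {0<..})"
  shows "E_set M p \<eta> T g l \<in> sets (M \<Otimes>\<^sub>M lborel)"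
proof -
  note [measurable] = kk_meas[where T=T and g=g and M=M, OF assms]
  show ?thesis unfolding E_set_eq by measurable
qed

lemma E_section: "x \<in> space M \<Longrightarrow> (x, t) \<in> E_set M p \<eta> T g l \<longleftrightarrow> t \<in> Aset p \<eta> (\<lambda>t. \<bar>T t g x\<bar>) l"
  by (auto simp: E_set_def Aset_def)

lemma weighted_eq:
  assumes "(\<lambda>(x, t). T t g x) \<in> borel_measurable (M \<Otimes>\<^sub>M restrict_space lborel {0<..})"
  shows "weighted_E M p \<eta> T g l = (\<integral>\<^sup>+x. ennreal (l powr p) * wint \<eta> (Aset p \<eta> (\<lambda>t. \<bar>T t g x\<bar>) l) \<partial>M)"
    and "(\<lambda>x. wint \<eta> (Aset p \<eta> (\<lambda>t. \<bar>T t g x\<bar>) l)) \<in> borel_measurable M"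
proof -
  note [measurable] = E_set_meas[where T=T and g=g and M=M and p=p and \<eta>=\<eta> and l=l, OF assms]
  let ?h = "\<lambda>z. indicator (E_set M p \<eta> T g l) z * ennreal (1 / (snd z * ln (1 / snd z) powr \<eta>))"
  have hm: "?h \<in> borel_measurable (M \<Otimes>\<^sub>M lborel)" by measurable
  have sec: "(\<integral>\<^sup>+t. ?h (x, t) \<partial>lborel) = wint \<eta> (Aset p \<eta> (\<lambda>t. \<bar>T t g x\<bar>) l)" if "x \<in> space M" for x
    unfolding wint_def wt_def
    by (intro nn_integral_cong) (simp add: indicator_def E_section[OF that])
  have m1: "(\<lambda>x. \<integral>\<^sup>+t. ?h (x, t) \<partial>lborel) \<in> borel_measurable M"
    using lborel.borel_measurable_nn_integral_fst[OF hm] by simp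
  show m2: "(\<lambda>x. wint \<eta> (Aset p \<eta> (\<lambda>t. \<bar>T t g x\<bar>) l)) \<in> borel_measurable M"
    using m1 sec by (subst measurable_cong[where g = "\<lambda>x. \<integral>\<^sup>+t. ?h (x, t) \<partial>lborel"]) auto
  have "weighted_E M p \<eta> T g l = ennreal (l powr p) * (\<integral>\<^sup>+x. \<integral>\<^sup>+t. ?h (x, t) \<partial>lborel \<partial>M)"
    unfolding weighted_E_def using lborel.nn_integral_fst[OF hm] by simp
  also have "\<dots> = ennreal (l powr p) * (\<integral>\<^sup>+x. wint \<eta> (Aset p \<eta> (\<lambda>t. \<bar>T t g x\<bar>) l) \<partial>M)"
    using sec by (simp cong: nn_integral_cong)
  also have "\<dots> = (\<integral>\<^sup>+x. ennreal (l powr p) * wint \<eta> (Aset p \<eta> (\<lambda>t. \<bar>T t g x\<bar>) l) \<partial>M)"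
    by (rule nn_integral_cmult[symmetric, OF m2])
  finally show "weighted_E M p \<eta> T g l = (\<integral>\<^sup>+x. ennreal (l powr p) * wint \<eta> (Aset p \<eta> (\<lambda>t. \<bar>T t g x\<bar>) l) \<partial>M)" .
qed
lemma nn_int_le_cS:
  fixes h S :: "'a \<Rightarrow> ennreal" and r :: real
  assumes hm: "h \<in> borel_measurable M" and r: "0 < r"
    and le: "\<And>x. x \<in> space M \<Longrightarrow> h x \<le> ennreal r * S x"
  shows "(\<integral>\<^sup>+x. h x \<partial>M) \<le> ennreal r * (\<integral>\<^sup>+x. S x \<partial>M)"
proof -
  have one: "ennreal r * ennreal (1/r) = 1" using r by (simp add: ennreal_mult[symmetric])
  have "(\<integral>\<^sup>+x. h x \<partial>M) = (\<integral>\<^sup>+x. ennreal r * (ennreal (1/r) * h x) \<partial>M)"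
    by (simp add: mult.assoc[symmetric] one)
  also have "\<dots> = ennreal r * (\<integral>\<^sup>+x. ennreal (1/r) * h x \<partial>M)"
    using hm by (intro nn_integral_cmult) measurable
  also have "(\<integral>\<^sup>+x. ennreal (1/r) * h x \<partial>M) \<le> (\<integral>\<^sup>+x. S x \<partial>M)"
  proof (intro nn_integral_mono)
    fix x assume x: "x \<in> space M"
    have "ennreal (1/r) * h x \<le> ennreal (1/r) * (ennreal r * S x)"
      using le[OF x] by (rule mult_left_mono) simp
    also have "\<dots> = S x" by (simp add: mult.assoc[symmetric] mult.commute[of "ennreal (1/r)"] one)
    finally show "ennreal (1/r) * h x \<le> S x" .
  qed
  then have "ennreal r * (\<integral>\<^sup>+x. ennreal (1/r) * h x \<partial>M) \<le> ennreal r * (\<integral>\<^sup>+x. S x \<partial>M)"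
    by (rule mult_left_mono) simp
  finally show ?thesis .
qed

lemma Lp_norm_pow_nonneg: "0 \<le> Lp_norm_pow M p g"
  unfolding Lp_norm_pow_def by (rule integral_nonneg_AE) simp

lemma weighted_upper:
  fixes M :: "'a measure" and p \<eta> C l :: real and T g
  assumes p: "1 < p" and eta: "1 < \<eta>" and C: "0 \<le> C" and l: "0 < l"
    and meas: "(\<lambda>(x, t). T t g x) \<in> borel_measurable (M \<Otimes>\<^sub>M restrict_space lborel {0<..})"
    and maximal: "(\<integral>\<^sup>+ x. (SUP t\<in>{0<..}. ennreal (\<bar>T t g x\<bar> powr p)) \<partial>M)
          \<le> ennreal (C powr p * Lp_norm_pow M p g)"
  shows "weighted_E M p \<eta> T g l \<le> ennreal (C powr p / (\<eta> - 1) * Lp_norm_pow M p g)"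
proof -
  let ?S = "\<lambda>x. (SUP t\<in>{0<..}. ennreal (\<bar>T t g x\<bar> powr p))"
  have "weighted_E M p \<eta> T g l = (\<integral>\<^sup>+x. ennreal (l powr p) * wint \<eta> (Aset p \<eta> (\<lambda>t. \<bar>T t g x\<bar>) l) \<partial>M)"
    by (rule weighted_eq(1)[where T=T and g=g and M=M, OF meas])
  also have "\<dots> \<le> ennreal (1/(\<eta>-1)) * (\<integral>\<^sup>+x. ?S x \<partial>M)"
  proof (rule nn_int_le_cS)
    show "(\<lambda>x. ennreal (l powr p) * wint \<eta> (Aset p \<eta> (\<lambda>t. \<bar>T t g x\<bar>) l)) \<in> borel_measurable M"
      using weighted_eq(2)[where T=T and g=g and M=M, OF meas] by measurable
    show "0 < 1/(\<eta>-1)" using eta by simp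
    fix x assume "x \<in> space M"
    show "ennreal (l powr p) * wint \<eta> (Aset p \<eta> (\<lambda>t. \<bar>T t g x\<bar>) l) \<le> ennreal (1/(\<eta>-1)) * ?S x"
      using p eta l by (intro Phi_bound) (auto intro!: SUP_upper)
  qed
  also have "\<dots> \<le> ennreal (1/(\<eta>-1)) * ennreal (C powr p * Lp_norm_pow M p g)"
    using maximal by (rule mult_left_mono) simp
  also have "\<dots> = ennreal (C powr p / (\<eta> - 1) * Lp_norm_pow M p g)"
    using eta Lp_norm_pow_nonneg[of M p g] by (simp add: ennreal_mult[symmetric])
  finally show ?thesis .
qed
lemma ess_bound_AE:
  fixes M :: "'a measure" and p B :: real and T :: "real \<Rightarrow> ('a \<Rightarrow> real) \<Rightarrow> ('a \<Rightarrow> real)" and g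
  assumes p: "1 < p"
    and meas: "(\<lambda>(x, t). T t g x) \<in> borel_measurable (M \<Otimes>\<^sub>M restrict_space lborel {0<..})"
    and maximal: "(\<integral>\<^sup>+ x. (SUP t\<in>{0<..}. ennreal (\<bar>T t g x\<bar> powr p)) \<partial>M) \<le> ennreal B"
  shows "AE x in M. \<exists>K. AE t in lborel. 0 < t \<and> t < 1/2 \<longrightarrow> \<bar>T t g x\<bar> \<le> K"
proof -
  note [measurable] = kk_meas[where T=T and g=g and M=M, OF meas]
  let ?S = "\<lambda>x. (SUP t\<in>{0<..}. ennreal (\<bar>T t g x\<bar> powr p))"
  define G where "G n = {z \<in> space (M \<Otimes>\<^sub>M lborel). 0 < snd z \<and> snd z < 1/2 \<and> \<bar>kk T g z\<bar> > real n}" for n :: nat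
  have Gm: "G n \<in> sets (M \<Otimes>\<^sub>M lborel)" for n unfolding G_def by measurable
  have em[measurable]: "(\<lambda>x. emeasure lborel (Pair x -` G n)) \<in> borel_measurable M" for n
    by (rule lborel.measurable_emeasure_Pair[OF Gm])
  define N where "N = {x \<in> space M. \<forall>n. emeasure lborel (Pair x -` G n) \<noteq> 0}"
  have Nm: "N \<in> sets M" unfolding N_def by measurable
  have sec: "Pair x -` G n = {t. 0 < t \<and> t < 1/2 \<and> \<bar>T t g x\<bar> > real n}" if "x \<in> space M" for x n
    using that by (auto simp: G_def kk_def space_pair_measure)
  have Stop: "?S x = top" if x: "x \<in> N" for x
  proof -
    have xs: "x \<in> space M" using x by (simp add: N_def)
    have big: "ennreal (real n) \<le> ?S x" if n: "1 \<le> n" for n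
    proof -
      have "emeasure lborel (Pair x -` G n) \<noteq> 0" using x by (simp add: N_def)
      then have "Pair x -` G n \<noteq> {}" by (metis emeasure_empty)
      then obtain t where t: "0 < t" "\<bar>T t g x\<bar> > real n" using sec[OF xs] by auto
      have "real n \<le> \<bar>T t g x\<bar> powr 1" using t by simp
      also have "\<dots> \<le> \<bar>T t g x\<bar> powr p" using p t n by (intro powr_mono) auto
      finally have "ennreal (real n) \<le> ennreal (\<bar>T t g x\<bar> powr p)" by (rule ennreal_leI)
      also have "\<dots> \<le> ?S x" using t by (intro SUP_upper) auto
      finally show ?thesis .
    qed
    show ?thesis
    proof (rule ccontr)
      assume "?S x \<noteq> top"
      then obtain s where s: "?S x = ennreal s" "0 \<le> s" by (cases "?S x") auto
      define n where "n = nat \<lceil>s\<rceil> + 1"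
      have "ennreal (real n) \<le> ennreal s" using big[of n] s by (simp add: n_def)
      then have "real n \<le> s" using s by simp
      moreover have "s < real n" unfolding n_def by linarith
      ultimately show False by simp
    qed
  qed
  have "emeasure M N = 0"
  proof (rule ccontr)
    assume ne: "emeasure M N \<noteq> 0"
    have "(\<integral>\<^sup>+x. top * indicator N x \<partial>M) \<le> (\<integral>\<^sup>+x. ?S x \<partial>M)"
      by (intro nn_integral_mono) (auto simp: indicator_def Stop)
    also have "\<dots> \<le> ennreal B" by (rule maximal)
    also have "\<dots> < top" by simp
    finally have "top * emeasure M N < top" using nn_integral_cmult_indicator[OF Nm, of top] by simp
    then show False using ne by (simp add: ennreal_mult_top top_unique)
  qed
  then have Nnull: "N \<in> null_sets M" using Nm by auto
  show ?thesis
  proof (rule AE_I'[OF Nnull], safe)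
    fix x assume x: "x \<in> space M" and notP: "\<nexists>K. AE t in lborel. 0 < t \<and> t < 1/2 \<longrightarrow> \<bar>T t g x\<bar> \<le> K"
    show "x \<in> N" unfolding N_def
    proof (safe intro!: x)
      fix n assume z: "emeasure lborel (Pair x -` G n) = 0"
      have "Pair x -` G n \<in> null_sets lborel" using z sets_Pair1[OF Gm] by auto
      then have "AE t in lborel. 0 < t \<and> t < 1/2 \<longrightarrow> \<bar>T t g x\<bar> \<le> real n"
        by (rule AE_I') (auto simp: sec[OF x])
      then show False using notP by blast
    qed
  qed
qed
lemma weighted_lim_dense:
  fixes M :: "'a measure" and p \<eta> B :: real and T :: "real \<Rightarrow> ('a \<Rightarrow> real) \<Rightarrow> ('a \<Rightarrow> real)" and d
  assumes p: "1 < p" and eta: "1 < \<eta>" and dL: "d \<in> Lp_set M p"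
    and meas: "(\<lambda>(x, t). T t d x) \<in> borel_measurable (M \<Otimes>\<^sub>M restrict_space lborel {0<..})"
    and maximal: "(\<integral>\<^sup>+ x. (SUP t\<in>{0<..}. ennreal (\<bar>T t d x\<bar> powr p)) \<partial>M) \<le> ennreal B"
    and conv: "AE x in M. ((\<lambda>t. T t d x) \<longlongrightarrow> d x) (at_right 0)"
  shows "((\<lambda>l. weighted_E M p \<eta> T d l) \<longlongrightarrow> ennreal (Lp_norm_pow M p d / (\<eta>-1))) at_top"
proof -
  let ?S = "\<lambda>x. (SUP t\<in>{0<..}. ennreal (\<bar>T t d x\<bar> powr p))"
  define \<Phi> where "\<Phi> l x = ennreal (l powr p) * wint \<eta> (Aset p \<eta> (\<lambda>t. \<bar>T t d x\<bar>) l)" for l x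
  have W: "weighted_E M p \<eta> T d l = (\<integral>\<^sup>+x. \<Phi> l x \<partial>M)" for l
    unfolding \<Phi>_def by (rule weighted_eq(1)[where T=T and g=d and M=M, OF meas])
  have \<Phi>m[measurable]: "\<Phi> l \<in> borel_measurable M" for l
    unfolding \<Phi>_def using weighted_eq(2)[where T=T and g=d and M=M and l=l and p=p and \<eta>=\<eta>, OF meas] by measurable
  have dm[measurable]: "d \<in> borel_measurable M" using dL by (simp add: Lp_set_def)
  have dint: "integrable M (\<lambda>x. \<bar>d x\<bar> powr p)" using dL by (simp add: Lp_set_def)
  have \<Phi>b: "\<Phi> l x \<le> ennreal (1/(\<eta>-1)) * ?S x" if "0 < l" for l x
    unfolding \<Phi>_def using p eta that by (intro Phi_bound) (auto intro!: SUP_upper)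
  have ptw: "AE x in M. ((\<lambda>l. \<Phi> l x) \<longlongrightarrow> ennreal (\<bar>d x\<bar> powr p / (\<eta>-1))) at_top"
    using conv ess_bound_AE[where T=T and g=d and M=M, OF p meas maximal]
  proof eventually_elim
    fix x assume c: "((\<lambda>t. T t d x) \<longlongrightarrow> d x) (at_right 0)"
      and "\<exists>K. AE t in lborel. 0 < t \<and> t < 1/2 \<longrightarrow> \<bar>T t d x\<bar> \<le> K"
    then obtain K where K: "AE t in lborel. 0 < t \<and> t < 1/2 \<longrightarrow> \<bar>T t d x\<bar> \<le> K" by blast
    show "((\<lambda>l. \<Phi> l x) \<longlongrightarrow> ennreal (\<bar>d x\<bar> powr p / (\<eta>-1))) at_top"
      unfolding \<Phi>_def using p eta
      by (intro Phi_lim[OF _ eta _ tendsto_rabs[OF c] K]) auto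
  qed
  have lim: "((\<lambda>l. \<integral>\<^sup>+x. \<Phi> l x \<partial>M) \<longlongrightarrow> (\<integral>\<^sup>+x. ennreal (\<bar>d x\<bar> powr p / (\<eta>-1)) \<partial>M)) at_top"
  proof (rule tendsto_at_topI_sequentially)
    fix X :: "nat \<Rightarrow> real" assume X: "filterlim X at_top sequentially"
    define Y where "Y n = max (X n) 1" for n
    have ev: "eventually (\<lambda>n. X n = Y n) sequentially"
      using filterlim_at_top[THEN iffD1, OF X, rule_format, of 1]
      by eventually_elim (simp add: Y_def)
    have Y: "filterlim Y at_top sequentially"
      using filterlim_cong[OF refl refl ev] X by simp
    have Ypos: "0 < Y n" for n by (simp add: Y_def)
    define w where "w x = (SUP n. \<Phi> (Y n) x)" for x
    have "(\<lambda>n. \<integral>\<^sup>+x. \<Phi> (Y n) x \<partial>M) \<longlonglongrightarrow> (\<integral>\<^sup>+x. ennreal (\<bar>d x\<bar> powr p / (\<eta>-1)) \<partial>M)"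
    proof (rule nn_integral_dominated_convergence[where w = w])
      show "(\<lambda>x. ennreal (\<bar>d x\<bar> powr p / (\<eta>-1))) \<in> borel_measurable M" by measurable
      show "w \<in> borel_measurable M" unfolding w_def by measurable
      show "AE x in M. \<Phi> (Y j) x \<le> w x" for j unfolding w_def by (intro AE_I2 SUP_upper) auto
      have "(\<integral>\<^sup>+x. w x \<partial>M) \<le> ennreal (1/(\<eta>-1)) * (\<integral>\<^sup>+x. ?S x \<partial>M)"
      proof (rule nn_int_le_cS)
        show "w \<in> borel_measurable M" unfolding w_def by measurable
        show "0 < 1/(\<eta>-1)" using eta by simp
        show "w x \<le> ennreal (1/(\<eta>-1)) * ?S x" for x
          unfolding w_def using \<Phi>b Ypos by (intro SUP_least) auto
      qed
      also have "\<dots> \<le> ennreal (1/(\<eta>-1)) * ennreal B" using maximal by (rule mult_left_mono) simp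
      also have "\<dots> < \<infinity>" by (simp add: ennreal_mult_less_top)
      finally show "(\<integral>\<^sup>+x. w x \<partial>M) < \<infinity>" .
      show "AE x in M. (\<lambda>i. \<Phi> (Y i) x) \<longlonglongrightarrow> ennreal (\<bar>d x\<bar> powr p / (\<eta>-1))"
        using ptw by eventually_elim (rule filterlim_compose[OF _ Y])
    qed (rule \<Phi>m)
    then show "(\<lambda>n. \<integral>\<^sup>+x. \<Phi> (X n) x \<partial>M) \<longlonglongrightarrow> (\<integral>\<^sup>+x. ennreal (\<bar>d x\<bar> powr p / (\<eta>-1)) \<partial>M)"
      by (rule Lim_transform_eventually) (use ev in \<open>auto elim: eventually_mono\<close>)
  qed
  have "(\<integral>\<^sup>+x. ennreal (\<bar>d x\<bar> powr p / (\<eta>-1)) \<partial>M) = ennreal (\<integral>x. \<bar>d x\<bar> powr p / (\<eta>-1) \<partial>M)"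
    using dint eta by (intro nn_integral_eq_integral) auto
  also have "\<dots> = ennreal (Lp_norm_pow M p d / (\<eta>-1))"
    by (simp add: Lp_norm_pow_def)
  finally show ?thesis using lim unfolding W by simp
qed
lemma conv_ineq:
  fixes a b \<theta> p :: real
  assumes p: "1 \<le> p" and th: "0 < \<theta>" "\<theta> < 1"
  shows "\<bar>a + b\<bar> powr p \<le> (1-\<theta>) powr (1-p) * \<bar>a\<bar> powr p + \<theta> powr (1-p) * \<bar>b\<bar> powr p"
proof -
  define x where "x = \<bar>a\<bar>"
  define y where "y = \<bar>b\<bar>"
  have xy: "0 \<le> x" "0 \<le> y" by (auto simp: x_def y_def)
  have "\<bar>a + b\<bar> powr p \<le> (x + y) powr p"
    unfolding x_def y_def using p by (intro powr_mono2) (auto intro: abs_triangle_ineq)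
  also have "(x + y) powr p \<le> (1-\<theta>) powr (1-p) * x powr p + \<theta> powr (1-p) * y powr p"
  proof -
    have g1: "1 \<le> \<theta> powr (1-p)"
      using powr_mono'[of "1-p" 0 \<theta>] p th by auto
    have g2: "1 \<le> (1-\<theta>) powr (1-p)"
      using powr_mono'[of "1-p" 0 "1-\<theta>"] p th by auto
    show ?thesis
    proof (cases "x = 0")
      case True
      have "y powr p \<le> \<theta> powr (1-p) * y powr p"
        using mult_right_mono[OF g1, of "y powr p"] by simp
      then show ?thesis using True by simp
    next
      case xne: False
      show ?thesis
      proof (cases "y = 0")
        case True
        have "x powr p \<le> (1-\<theta>) powr (1-p) * x powr p"
          using mult_right_mono[OF g2, of "x powr p"] by simp
        then show ?thesis using True by simp
      next
        case False
        then have ypos: "0 < y" using xy by simp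
        have xpos: "0 < x" using xne xy by simp
        have "(\<lambda>z. z powr p) ((1 - \<theta>) *\<^sub>R (x/(1-\<theta>)) + \<theta> *\<^sub>R (y/\<theta>))
              \<le> (1 - \<theta>) * (x/(1-\<theta>)) powr p + \<theta> * (y/\<theta>) powr p"
          using th xpos ypos by (intro convex_onD[OF powr_convex[OF p]]) auto
        moreover have "(1 - \<theta>) *\<^sub>R (x/(1-\<theta>)) + \<theta> *\<^sub>R (y/\<theta>) = x + y" using th by simp
        moreover have "(1 - \<theta>) * (x/(1-\<theta>)) powr p = (1-\<theta>) powr (1-p) * x powr p"
          using th xpos by (simp add: powr_divide powr_diff field_simps)
        moreover have "\<theta> * (y/\<theta>) powr p = \<theta> powr (1-p) * y powr p"
          using th ypos by (simp add: powr_divide powr_diff field_simps)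
        ultimately show ?thesis by simp
      qed
    qed
  qed
  finally show ?thesis unfolding x_def y_def .
qed

lemma Lp_diff:
  assumes p: "1 \<le> p" and g: "g \<in> Lp_set M p" and h: "h \<in> Lp_set M p"
  shows "(\<lambda>x. g x - h x) \<in> Lp_set M p"
proof -
  have [measurable]: "g \<in> borel_measurable M" "h \<in> borel_measurable M" using g h by (auto simp: Lp_set_def)
  have ig: "integrable M (\<lambda>x. \<bar>g x\<bar> powr p)" and ih: "integrable M (\<lambda>x. \<bar>h x\<bar> powr p)"
    using g h by (auto simp: Lp_set_def)
  have "integrable M (\<lambda>x. \<bar>g x - h x\<bar> powr p)"
  proof (rule Bochner_Integration.integrable_bound[where f="\<lambda>x. (1/2) powr (1-p) * \<bar>g x\<bar> powr p + (1/2) powr (1-p) * \<bar>h x\<bar> powr p"])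
    show "integrable M (\<lambda>x. (1/2) powr (1-p) * \<bar>g x\<bar> powr p + (1/2) powr (1-p) * \<bar>h x\<bar> powr p)"
      using ig ih by auto
    show "(\<lambda>x. \<bar>g x - h x\<bar> powr p) \<in> borel_measurable M" by measurable
    show "AE x in M. norm (\<bar>g x - h x\<bar> powr p) \<le> norm ((1/2) powr (1-p) * \<bar>g x\<bar> powr p + (1/2) powr (1-p) * \<bar>h x\<bar> powr p)"
    proof (intro AE_I2)
      fix x
      have "\<bar>g x + (- h x)\<bar> powr p \<le> (1 - 1/2) powr (1-p) * \<bar>g x\<bar> powr p + (1/2) powr (1-p) * \<bar>- h x\<bar> powr p"
        using p by (intro conv_ineq) auto
      then show "norm (\<bar>g x - h x\<bar> powr p) \<le> norm ((1/2) powr (1-p) * \<bar>g x\<bar> powr p + (1/2) powr (1-p) * \<bar>h x\<bar> powr p)"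
        by simp
    qed
  qed
  then show ?thesis by (simp add: Lp_set_def)
qed

lemma Lp_norm_conv:
  assumes p: "1 \<le> p" and th: "0 < \<theta>" "\<theta> < 1" and g: "g \<in> Lp_set M p" and h: "h \<in> Lp_set M p"
  shows "Lp_norm_pow M p g \<le> (1-\<theta>) powr (1-p) * Lp_norm_pow M p h + \<theta> powr (1-p) * Lp_norm_pow M p (\<lambda>x. g x - h x)"
proof -
  have gh: "(\<lambda>x. g x - h x) \<in> Lp_set M p" by (rule Lp_diff[OF p g h])
  have ig: "integrable M (\<lambda>x. \<bar>g x\<bar> powr p)" and ih: "integrable M (\<lambda>x. \<bar>h x\<bar> powr p)"
    and igh: "integrable M (\<lambda>x. \<bar>g x - h x\<bar> powr p)"
    using g h gh by (auto simp: Lp_set_def)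
  have "Lp_norm_pow M p g \<le> (\<integral>x. (1-\<theta>) powr (1-p) * \<bar>h x\<bar> powr p + \<theta> powr (1-p) * \<bar>g x - h x\<bar> powr p \<partial>M)"
    unfolding Lp_norm_pow_def
  proof (rule integral_mono)
    show "integrable M (\<lambda>x. \<bar>g x\<bar> powr p)" by (rule ig)
    show "integrable M (\<lambda>x. (1-\<theta>) powr (1-p) * \<bar>h x\<bar> powr p + \<theta> powr (1-p) * \<bar>g x - h x\<bar> powr p)"
      using ih igh by auto
    fix x
    have "\<bar>h x + (g x - h x)\<bar> powr p \<le> (1-\<theta>) powr (1-p) * \<bar>h x\<bar> powr p + \<theta> powr (1-p) * \<bar>g x - h x\<bar> powr p"
      by (rule conv_ineq[OF p th])
    then show "\<bar>g x\<bar> powr p \<le> (1-\<theta>) powr (1-p) * \<bar>h x\<bar> powr p + \<theta> powr (1-p) * \<bar>g x - h x\<bar> powr p"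
      by simp
  qed
  also have "\<dots> = (1-\<theta>) powr (1-p) * Lp_norm_pow M p h + \<theta> powr (1-p) * Lp_norm_pow M p (\<lambda>x. g x - h x)"
    using ih igh by (simp add: Lp_norm_pow_def)
  finally show ?thesis .
qed
lemma weighted_compare:
  fixes M :: "'a measure" and p \<eta> \<theta> l :: real and T :: "real \<Rightarrow> ('a \<Rightarrow> real) \<Rightarrow> ('a \<Rightarrow> real)" and g h
  assumes p: "0 < p" and sub: "sublinear_family M p T"
    and g: "g \<in> Lp_set M p" and h: "h \<in> Lp_set M p" and gh: "(\<lambda>y. g y - h y) \<in> Lp_set M p"
    and mh: "(\<lambda>(x, t). T t h x) \<in> borel_measurable (M \<Otimes>\<^sub>M restrict_space lborel {0<..})"
    and mgh: "(\<lambda>(x, t). T t (\<lambda>y. g y - h y) x) \<in> borel_measurable (M \<Otimes>\<^sub>M restrict_space lborel {0<..})"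
    and th: "0 < \<theta>" "\<theta> < 1" and l: "0 < l"
  shows "weighted_E M p \<eta> T g l \<le> ennreal ((1-\<theta>) powr (-p)) * weighted_E M p \<eta> T h ((1-\<theta>)*l)
           + ennreal (\<theta> powr (-p)) * weighted_E M p \<eta> T (\<lambda>y. g y - h y) (\<theta>*l)"
proof -
  let ?gh = "\<lambda>y. g y - h y"
  let ?w = "\<lambda>z::'a \<times> real. ennreal (1 / (snd z * ln (1 / snd z) powr \<eta>))"
  define E1 where "E1 = E_set M p \<eta> T h ((1-\<theta>)*l)"
  define E2 where "E2 = E_set M p \<eta> T ?gh (\<theta>*l)"
  have E1m[measurable]: "E1 \<in> sets (M \<Otimes>\<^sub>M lborel)" unfolding E1_def
    by (rule E_set_meas[where T=T and g=h and M=M, OF mh])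
  have E2m[measurable]: "E2 \<in> sets (M \<Otimes>\<^sub>M lborel)" unfolding E2_def
    by (rule E_set_meas[where T=T and g="?gh" and M=M, OF mgh])
  have subset: "E_set M p \<eta> T g l \<subseteq> E1 \<union> E2"
  proof
    fix z assume z: "z \<in> E_set M p \<eta> T g l"
    obtain x t where zxt: "z = (x, t)" by (cases z)
    define u where "u = ln (1/t) powr ((1-\<eta>)/p)"
    have x: "x \<in> space M" and t: "0 < t" "t < 1/2" and gt: "\<bar>T t g x\<bar> > l * u"
      using z by (auto simp: zxt E_set_def u_def)
    have eqg: "(\<lambda>y. h y + ?gh y) = g" by auto
    have "\<bar>T t (\<lambda>y. h y + ?gh y) x\<bar> \<le> \<bar>T t h x\<bar> + \<bar>T t ?gh x\<bar>"
      using conjunct1[OF sub[unfolded sublinear_family_def], rule_format, OF t(1) h gh x] .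
    then have tri: "\<bar>T t g x\<bar> \<le> \<bar>T t h x\<bar> + \<bar>T t ?gh x\<bar>" unfolding eqg .
    have "\<bar>T t h x\<bar> > (1-\<theta>)*l * u \<or> \<bar>T t ?gh x\<bar> > \<theta>*l * u"
    proof (rule ccontr)
      assume "\<not> ?thesis"
      then have "\<bar>T t h x\<bar> + \<bar>T t ?gh x\<bar> \<le> (1-\<theta>)*l * u + \<theta>*l*u" by auto
      also have "\<dots> = l * u" by (simp add: algebra_simps)
      finally show False using tri gt by linarith
    qed
    then show "z \<in> E1 \<union> E2"
    proof
      assume "\<bar>T t h x\<bar> > (1-\<theta>)*l * u"
      then have "z \<in> E1" unfolding zxt E1_def E_set_def u_def using x t by simp
      then show ?thesis by simp
    next
      assume "\<bar>T t ?gh x\<bar> > \<theta>*l * u"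
      then have "z \<in> E2" unfolding zxt E2_def E_set_def u_def using x t by simp
      then show ?thesis by simp
    qed
  qed
  have I: "(\<integral>\<^sup>+z. indicator (E_set M p \<eta> T g l) z * ?w z \<partial>(M \<Otimes>\<^sub>M lborel))
      \<le> (\<integral>\<^sup>+z. indicator E1 z * ?w z \<partial>(M \<Otimes>\<^sub>M lborel)) + (\<integral>\<^sup>+z. indicator E2 z * ?w z \<partial>(M \<Otimes>\<^sub>M lborel))"
  proof -
    have "(\<integral>\<^sup>+z. indicator (E_set M p \<eta> T g l) z * ?w z \<partial>(M \<Otimes>\<^sub>M lborel))
        \<le> (\<integral>\<^sup>+z. indicator E1 z * ?w z + indicator E2 z * ?w z \<partial>(M \<Otimes>\<^sub>M lborel))"
    proof (intro nn_integral_mono)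
      fix z
      have "indicator (E_set M p \<eta> T g l) z \<le> (indicator E1 z + indicator E2 z :: ennreal)"
        using subset by (auto simp: indicator_def)
      then have "indicator (E_set M p \<eta> T g l) z * ?w z \<le> (indicator E1 z + indicator E2 z) * ?w z"
        by (rule mult_right_mono) simp
      then show "indicator (E_set M p \<eta> T g l) z * ?w z \<le> indicator E1 z * ?w z + indicator E2 z * ?w z"
        by (simp add: distrib_right)
    qed
    also have "\<dots> = (\<integral>\<^sup>+z. indicator E1 z * ?w z \<partial>(M \<Otimes>\<^sub>M lborel)) + (\<integral>\<^sup>+z. indicator E2 z * ?w z \<partial>(M \<Otimes>\<^sub>M lborel))"
      by (intro nn_integral_add) measurable
    finally show ?thesis .
  qed
  have c1: "l powr p = (1-\<theta>) powr (-p) * ((1-\<theta>)*l) powr p"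
    using th l by (simp add: powr_mult powr_minus)
  have c2: "l powr p = \<theta> powr (-p) * (\<theta>*l) powr p"
    using th l by (simp add: powr_mult powr_minus)
  have "weighted_E M p \<eta> T g l \<le> ennreal (l powr p) * ((\<integral>\<^sup>+z. indicator E1 z * ?w z \<partial>(M \<Otimes>\<^sub>M lborel)) + (\<integral>\<^sup>+z. indicator E2 z * ?w z \<partial>(M \<Otimes>\<^sub>M lborel)))"
    unfolding weighted_E_def by (rule mult_left_mono[OF I]) simp
  also have "\<dots> = ennreal (l powr p) * (\<integral>\<^sup>+z. indicator E1 z * ?w z \<partial>(M \<Otimes>\<^sub>M lborel)) + ennreal (l powr p) * (\<integral>\<^sup>+z. indicator E2 z * ?w z \<partial>(M \<Otimes>\<^sub>M lborel))"
    by (simp add: distrib_left)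
  also have "ennreal (l powr p) * (\<integral>\<^sup>+z. indicator E1 z * ?w z \<partial>(M \<Otimes>\<^sub>M lborel)) = ennreal ((1-\<theta>) powr (-p)) * weighted_E M p \<eta> T h ((1-\<theta>)*l)"
    unfolding weighted_E_def E1_def c1 by (simp add: ennreal_mult mult.assoc)
  also have "ennreal (l powr p) * (\<integral>\<^sup>+z. indicator E2 z * ?w z \<partial>(M \<Otimes>\<^sub>M lborel)) = ennreal (\<theta> powr (-p)) * weighted_E M p \<eta> T ?gh (\<theta>*l)"
    unfolding weighted_E_def E2_def c2 by (simp add: ennreal_mult mult.assoc)
  finally show ?thesis .
qed
lemma ev_scale:
  fixes c :: real
  assumes c: "0 < c" and ev: "eventually P at_top"
  shows "eventually (\<lambda>l. P (c*l)) at_top"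
proof -
  obtain N where N: "\<And>x. x \<ge> N \<Longrightarrow> P x" using ev unfolding eventually_at_top_linorder by auto
  have "eventually (\<lambda>l. l \<ge> N / c) at_top" by (rule eventually_ge_at_top)
  then show ?thesis
  proof eventually_elim
    fix l assume "l \<ge> N / c"
    then have "c * l \<ge> N" using c by (simp add: field_simps)
    then show "P (c*l)" by (rule N)
  qed
qed

lemma ev_lower:
  fixes F :: "real \<Rightarrow> ennreal"
  assumes lim: "(F \<longlongrightarrow> ennreal x) at_top" and tau: "0 < \<tau>"
  shows "eventually (\<lambda>l. ennreal (x - \<tau>) \<le> F l) at_top"
proof (cases "x - \<tau> \<le> 0")
  case True
  then show ?thesis by (simp add: ennreal_eq_0_iff[THEN iffD2])
next
  case False
  then have "ennreal (x - \<tau>) < ennreal x" using tau by (intro ennreal_lessI) auto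
  from order_tendstoD(1)[OF lim this] show ?thesis by eventually_elim simp
qed

lemma ev_upper:
  fixes F :: "real \<Rightarrow> ennreal"
  assumes lim: "(F \<longlongrightarrow> ennreal x) at_top" and tau: "0 < \<tau>" and x: "0 \<le> x"
  shows "eventually (\<lambda>l. F l < ennreal (x + \<tau>)) at_top"
proof -
  have "ennreal x < ennreal (x + \<tau>)" using tau x by (intro ennreal_lessI) auto
  from order_tendstoD(2)[OF lim this] show ?thesis .
qed

lemma tendsto_1m_powr:
  fixes a :: real
  shows "((\<lambda>\<theta>::real. (1-\<theta>) powr a) \<longlongrightarrow> 1) (at_right 0)"
proof -
  have "((\<lambda>\<theta>::real. 1 - \<theta>) \<longlongrightarrow> 1 - 0) (at_right 0)"
    by (intro tendsto_diff tendsto_const tendsto_ident_at)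
  then have "((\<lambda>\<theta>::real. (1-\<theta>) powr a) \<longlongrightarrow> 1 powr a) (at_right 0)"
    by (intro tendsto_powr tendsto_const) auto
  then show ?thesis by simp
qed

lemma arith_lower:
  fixes A P' Q Bt Kc N dd ed gap \<tau> wf hh y' c' e :: real
  assumes A: "0 < A" and P': "0 < P'" and e: "0 < e"
    and c'def: "c' = Q / (P' * A * e) + Bt * Kc / A" and c': "0 \<le> c'"
    and Ndd: "N \<le> P' * dd + Q * ed" and edlt: "ed < gap / (2*(c'+1))"
    and gap: "0 < gap" and r: "dd/e - \<tau> \<le> A * wf + Bt * (Kc * ed)"
    and tau: "\<tau> = gap * A / 4" and hh: "hh = N / (P' * A * e)" and y': "y' = hh - gap"
  shows "y' < wf"
proof -
  have 1: "(N - Q*ed)/(P'*e) \<le> dd/e"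
  proof -
    have "(N - Q*ed)/(P'*e) \<le> (P'*dd)/(P'*e)"
      using Ndd P' e by (intro divide_right_mono) auto
    also have "\<dots> = dd/e" using P' by simp
    finally show ?thesis .
  qed
  have 2: "A*hh = N/(P'*e)" using A P' e unfolding hh by (simp add: field_simps)
  have 3: "A*(c'*ed) = Q*ed/(P'*e) + Bt*(Kc*ed)" using A P' e unfolding c'def by (simp add: field_simps)
  have 4: "(N - Q*ed)/(P'*e) = N/(P'*e) - Q*ed/(P'*e)" by (simp add: diff_divide_distrib)
  have 5: "A*(gap/4) = \<tau>" unfolding tau by simp
  have 6: "A*(hh - c'*ed - gap/4) = A*hh - A*(c'*ed) - A*(gap/4)" by (simp add: algebra_simps)
  have "A*(hh - c'*ed - gap/4) \<le> A*wf" using 1 2 3 4 5 6 r by linarith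
  then have 7: "hh - c'*ed - gap/4 \<le> wf" using A by simp
  have c1: "0 < c' + 1" using c' by simp
  have 8: "c' * ed \<le> c' * (gap / (2*(c'+1)))" using edlt c' by (intro mult_left_mono) auto
  have 9: "c' * (gap / (2*(c'+1))) < gap/2"
  proof -
    have "c' * (gap / (2*(c'+1))) = (c' / (c'+1)) * (gap/2)" by (simp add: field_simps)
    also have "\<dots> < 1 * (gap/2)" using c1 gap by (intro mult_strict_right_mono) auto
    finally show ?thesis by simp
  qed
  show ?thesis using 7 8 9 y' gap by linarith
qed

lemma arith_upper:
  fixes A P' Q Bt Kc N dd ed gap \<tau> gg y' c e :: real
  assumes A: "0 < A" and e: "0 < e"
    and cdef: "c = A * Q / e + Bt * Kc" and c: "0 \<le> c"
    and ddle: "dd \<le> P' * N + Q * ed" and edlt: "ed < gap / (2*(c+1))"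
    and gap: "0 < gap" and tau: "\<tau> = gap / (4 * A)"
    and gg: "gg = A * (P' * N) / e" and y': "y' = gg + gap"
  shows "A * (dd/e + \<tau>) + Bt * (Kc * ed) < y'"
proof -
  have 1: "A * (dd/e) \<le> A * ((P' * N + Q * ed)/e)"
    using ddle A e by (intro mult_left_mono divide_right_mono) auto
  have 2: "A * ((P' * N + Q * ed)/e) = gg + A * Q * ed / e" unfolding gg by (simp add: field_simps add_divide_distrib)
  have 3: "A * \<tau> = gap/4" using A unfolding tau by simp
  have c1: "0 < c + 1" using c by simp
  have 4: "c * ed \<le> c * (gap / (2*(c+1)))" using edlt c by (intro mult_left_mono) auto
  have 5: "c * (gap / (2*(c+1))) < gap/2"
  proof -
    have "c * (gap / (2*(c+1))) = (c / (c+1)) * (gap/2)" by (simp add: field_simps)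
    also have "\<dots> < 1 * (gap/2)" using c1 gap by (intro mult_strict_right_mono) auto
    finally show ?thesis by simp
  qed
  have 6: "c * ed = A * Q * ed / e + Bt * (Kc * ed)" unfolding cdef by (simp add: field_simps)
  have 7: "A * (dd/e + \<tau>) = A * (dd/e) + A * \<tau>" by (simp add: distrib_left)
  define X where "X = A * Q * ed / e"
  have 8: "X + Bt * (Kc * ed) < gap/2" using 4 5 6 unfolding X_def by linarith
  have 9: "A * (dd/e) \<le> gg + X" using 1 2 unfolding X_def by linarith
  show ?thesis using 3 7 8 9 y' gap by linarith
qed

theorem mainTheorem4:
  fixes M :: "'a measure" and p \<eta> C :: real
    and T :: "real \<Rightarrow> ('a \<Rightarrow> real) \<Rightarrow> ('a \<Rightarrow> real)"
    and f :: "'a \<Rightarrow> real"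
  assumes sf: "sigma_finite_measure M"
    and p: "1 < p" and eta: "1 < \<eta>" and C: "0 \<le> C"
    and sub: "sublinear_family M p T"
    and meas: "\<And>g. g \<in> Lp_set M p \<Longrightarrow>
        (\<lambda>(x, t). T t g x) \<in> borel_measurable (M \<Otimes>\<^sub>M restrict_space lborel {0<..})"
    and maximal: "\<And>g. g \<in> Lp_set M p \<Longrightarrow>
        (\<integral>\<^sup>+ x. (SUP t\<in>{0<..}. ennreal (\<bar>T t g x\<bar> powr p)) \<partial>M)
          \<le> ennreal (C powr p * Lp_norm_pow M p g)"
    and dense: "\<exists>D \<subseteq> Lp_set M p.
        (\<forall>g\<in>Lp_set M p. \<forall>\<epsilon>>0. \<exists>d\<in>D. Lp_norm_pow M p (\<lambda>x. g x - d x) < \<epsilon>) \<and>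
        (\<forall>d\<in>D. AE x in M. ((\<lambda>t. T t d x) \<longlongrightarrow> d x) (at_right 0))"
    and f: "f \<in> Lp_set M p"
  shows "\<exists>L. ((\<lambda>l. weighted_E M p \<eta> T f l) \<longlongrightarrow> L) at_top \<and>
      ennreal (Lp_norm_pow M p f / (\<eta> - 1)) \<le> L \<and>
      L \<le> (SUP l\<in>{0<..}. weighted_E M p \<eta> T f l) \<and>
      (SUP l\<in>{0<..}. weighted_E M p \<eta> T f l) \<le> ennreal (C powr p / (\<eta> - 1) * Lp_norm_pow M p f)"
proof -
  obtain D where D: "D \<subseteq> Lp_set M p"
    and Dapprox: "\<forall>g\<in>Lp_set M p. \<forall>\<epsilon>>0. \<exists>d\<in>D. Lp_norm_pow M p (\<lambda>x. g x - d x) < \<epsilon>"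
    and Dconv: "\<forall>d\<in>D. AE x in M. ((\<lambda>t. T t d x) \<longlongrightarrow> d x) (at_right 0)"
    using dense by blast
  have p0: "0 < p" "1 \<le> p" using p by auto
  define N where "N = Lp_norm_pow M p f"
  have N0: "0 \<le> N" unfolding N_def by (rule Lp_norm_pow_nonneg)
  define Kc where "Kc = C powr p / (\<eta>-1)"
  have Kc0: "0 \<le> Kc" using eta by (simp add: Kc_def)
  have e1: "0 < \<eta> - 1" using eta by simp
  have upper: "weighted_E M p \<eta> T g l \<le> ennreal (Kc * Lp_norm_pow M p g)"
    if "g \<in> Lp_set M p" "0 < l" for g l
    unfolding Kc_def by (rule weighted_upper[where T=T and g=g and M=M, OF p eta C that(2) meas[OF that(1)] maximal[OF that(1)]])
  have cmp: "weighted_E M p \<eta> T g l \<le> ennreal ((1-\<theta>) powr (-p)) * weighted_E M p \<eta> T h ((1-\<theta>)*l)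
           + ennreal (\<theta> powr (-p)) * ennreal (Kc * Lp_norm_pow M p (\<lambda>y. g y - h y))"
    if g: "g \<in> Lp_set M p" and h: "h \<in> Lp_set M p" and th: "0 < \<theta>" "\<theta> < 1" and l: "0 < l" for g h \<theta> l
  proof -
    have gh: "(\<lambda>y. g y - h y) \<in> Lp_set M p" by (rule Lp_diff[OF p0(2) g h])
    have "weighted_E M p \<eta> T g l \<le> ennreal ((1-\<theta>) powr (-p)) * weighted_E M p \<eta> T h ((1-\<theta>)*l)
           + ennreal (\<theta> powr (-p)) * weighted_E M p \<eta> T (\<lambda>y. g y - h y) (\<theta>*l)"
      by (rule weighted_compare[where T=T and g=g and h=h and M=M, OF p0(1) sub g h gh meas[OF h] meas[OF gh] th l])
    also have "\<dots> \<le> ennreal ((1-\<theta>) powr (-p)) * weighted_E M p \<eta> T h ((1-\<theta>)*l)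
           + ennreal (\<theta> powr (-p)) * ennreal (Kc * Lp_norm_pow M p (\<lambda>y. g y - h y))"
      using th l by (intro add_left_mono mult_left_mono upper[OF gh]) auto
    finally show ?thesis .
  qed
  have dlim: "((\<lambda>l. weighted_E M p \<eta> T d l) \<longlongrightarrow> ennreal (Lp_norm_pow M p d / (\<eta>-1))) at_top"
    if d: "d \<in> D" for d
  proof -
    have dL: "d \<in> Lp_set M p" using d D by auto
    show ?thesis
      by (rule weighted_lim_dense[where T=T and d=d and M=M, OF p eta dL meas[OF dL] maximal[OF dL]]) (use Dconv d in auto)
  qed
  have normsym: "Lp_norm_pow M p (\<lambda>x. d x - f x) = Lp_norm_pow M p (\<lambda>x. f x - d x)" for d
    by (simp add: Lp_norm_pow_def abs_minus_commute)
  have lim: "((\<lambda>l. weighted_E M p \<eta> T f l) \<longlongrightarrow> ennreal (N / (\<eta>-1))) at_top"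
  proof (rule order_tendstoI)
    fix y assume y: "y < ennreal (N / (\<eta>-1))"
    then have "y \<noteq> top" by (auto simp: top_unique)
    then obtain y' where y': "y = ennreal y'" "0 \<le> y'" by (cases y) auto
    have y'lt: "y' < N / (\<eta>-1)" using y y' ennreal_less_iff[OF y'(2)] by simp
    define hh where "hh \<theta> = N / ((1-\<theta>) powr (1-p) * (1-\<theta>) powr (-p) * (\<eta>-1))" for \<theta> :: real
    have hlim: "(hh \<longlongrightarrow> N / (\<eta>-1)) (at_right 0)"
    proof -
      have "(hh \<longlongrightarrow> N / (1 * 1 * (\<eta>-1))) (at_right 0)"
        unfolding hh_def using e1
        by (intro tendsto_divide tendsto_mult tendsto_const tendsto_1m_powr) auto
      then show ?thesis by simp
    qed
    obtain \<theta> where th: "0 < \<theta>" "\<theta> < 1" "y' < hh \<theta>"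
      using choose_eps_gt[OF hlim y'lt zero_less_one] by auto
    define A where "A = (1-\<theta>) powr (-p)"
    define Bt where "Bt = \<theta> powr (-p)"
    define P' where "P' = (1-\<theta>) powr (1-p)"
    define Q where "Q = \<theta> powr (1-p)"
    have pos: "0 < A" "0 < Bt" "0 < P'" "0 < Q" using th by (auto simp: A_def Bt_def P'_def Q_def)
    define gap where "gap = hh \<theta> - y'"
    have gap: "0 < gap" using th by (simp add: gap_def)
    define c' where "c' = Q / (P' * A * (\<eta>-1)) + Bt * Kc / A"
    have c': "0 \<le> c'" using pos e1 Kc0 by (simp add: c'_def)
    have "0 < gap / (2*(c'+1))" using gap c' by simp
    from Dapprox[rule_format, OF f this] obtain d where d: "d \<in> D" and edlt: "Lp_norm_pow M p (\<lambda>x. f x - d x) < gap / (2*(c'+1))"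
      by blast
    define ed where "ed = Lp_norm_pow M p (\<lambda>x. f x - d x)"
    have ed0: "0 \<le> ed" unfolding ed_def by (rule Lp_norm_pow_nonneg)
    have dL: "d \<in> Lp_set M p" using d D by auto
    define dd where "dd = Lp_norm_pow M p d"
    have Ndd: "N \<le> P' * dd + Q * ed"
      using Lp_norm_conv[OF p0(2) th(1,2) f dL] by (simp add: N_def P'_def Q_def dd_def ed_def)
    define \<tau> where "\<tau> = gap * A / 4"
    have tau: "0 < \<tau>" using gap pos by (simp add: \<tau>_def)
    have ev1: "eventually (\<lambda>l'. ennreal (dd/(\<eta>-1) - \<tau>) \<le> weighted_E M p \<eta> T d l') at_top"
      unfolding dd_def by (rule ev_lower[OF dlim[OF d] tau])
    have ev: "eventually (\<lambda>l'. y < weighted_E M p \<eta> T f ((1-\<theta>)*l')) at_top"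
      using ev1 eventually_gt_at_top[of 0]
    proof eventually_elim
      fix l' :: real assume le: "ennreal (dd/(\<eta>-1) - \<tau>) \<le> weighted_E M p \<eta> T d l'" and l': "0 < l'"
      have l: "0 < (1-\<theta>)*l'" using l' th by simp
      have "weighted_E M p \<eta> T f ((1-\<theta>)*l') \<le> ennreal (Kc * N)"
        unfolding N_def by (rule upper[OF f l])
      then have "weighted_E M p \<eta> T f ((1-\<theta>)*l') \<noteq> top" by (rule neq_top_trans[rotated]) simp
      then obtain wf where wf: "weighted_E M p \<eta> T f ((1-\<theta>)*l') = ennreal wf" "0 \<le> wf"
        by (cases "weighted_E M p \<eta> T f ((1-\<theta>)*l')") auto
      have "ennreal (dd/(\<eta>-1) - \<tau>) \<le> ennreal A * weighted_E M p \<eta> T f ((1-\<theta>)*l') + ennreal Bt * ennreal (Kc * Lp_norm_pow M p (\<lambda>y. d y - f y))"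
        unfolding A_def Bt_def by (rule order_trans[OF le cmp[OF dL f th(1,2) l']])
      also have "\<dots> = ennreal A * ennreal wf + ennreal Bt * ennreal (Kc * ed)"
        unfolding wf(1) normsym ed_def ..
      also have "\<dots> = ennreal (A * wf + Bt * (Kc * ed))"
        using pos wf Kc0 ed0 by (simp add: ennreal_mult)
      finally have r0: "ennreal (dd/(\<eta>-1) - \<tau>) \<le> ennreal (A * wf + Bt * (Kc * ed))" .
      have nn0: "0 \<le> A * wf + Bt * (Kc * ed)" using pos wf Kc0 ed0 by simp
      have r: "dd/(\<eta>-1) - \<tau> \<le> A * wf + Bt * (Kc * ed)"
        using r0[unfolded ennreal_le_iff[OF nn0]] .
      have hheq: "hh \<theta> = N / (P' * A * (\<eta>-1))" by (simp add: hh_def P'_def A_def)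
      have "y' < wf"
        by (rule arith_lower[OF pos(1) pos(3) e1 c'_def c' Ndd edlt[folded ed_def] gap r \<tau>_def hheq])
           (simp add: gap_def)
      then show "y < weighted_E M p \<eta> T f ((1-\<theta>)*l')"
        unfolding wf y' using y' by (intro ennreal_lessI) auto
    qed
    have "eventually (\<lambda>l. y < weighted_E M p \<eta> T f ((1-\<theta>)*((1/(1-\<theta>))*l))) at_top"
      using th by (intro ev_scale[OF _ ev]) auto
    then show "eventually (\<lambda>l. y < weighted_E M p \<eta> T f l) at_top"
      using th by simp
  next
    fix y assume y: "ennreal (N / (\<eta>-1)) < y"
    show "eventually (\<lambda>l. weighted_E M p \<eta> T f l < y) at_top"
    proof (cases "y = top")
      case True
      show ?thesis using eventually_gt_at_top[of 0]
      proof eventually_elim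
        fix l :: real assume "0 < l"
        then have "weighted_E M p \<eta> T f l \<le> ennreal (Kc * N)" unfolding N_def by (rule upper[OF f])
        also have "\<dots> < y" using True by simp
        finally show "weighted_E M p \<eta> T f l < y" .
      qed
    next
      case False
      then obtain y' where y': "y = ennreal y'" "0 \<le> y'" by (cases y) auto
      have nn: "0 \<le> N / (\<eta>-1)" using N0 e1 by simp
      have y'gt: "N / (\<eta>-1) < y'" using y y' ennreal_less_iff[OF nn] by simp
      define gg where "gg \<theta> = (1-\<theta>) powr (-p) * ((1-\<theta>) powr (1-p) * N) / (\<eta>-1)" for \<theta> :: real
      have glim: "(gg \<longlongrightarrow> N / (\<eta>-1)) (at_right 0)"
      proof -
        have "(gg \<longlongrightarrow> 1 * (1 * N) / (\<eta>-1)) (at_right 0)"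
          unfolding gg_def using e1
          by (intro tendsto_divide tendsto_mult tendsto_const tendsto_1m_powr) auto
        then show ?thesis by simp
      qed
      obtain \<theta> where th: "0 < \<theta>" "\<theta> < 1" "gg \<theta> < y'"
        using choose_eps_lt[OF glim y'gt zero_less_one] by auto
      define A where "A = (1-\<theta>) powr (-p)"
      define Bt where "Bt = \<theta> powr (-p)"
      define P' where "P' = (1-\<theta>) powr (1-p)"
      define Q where "Q = \<theta> powr (1-p)"
      have pos: "0 < A" "0 < Bt" "0 < P'" "0 < Q" using th by (auto simp: A_def Bt_def P'_def Q_def)
      define gap where "gap = y' - gg \<theta>"
      have gap: "0 < gap" using th by (simp add: gap_def)
      define c where "c = A * Q / (\<eta>-1) + Bt * Kc"
      have c: "0 \<le> c" using pos e1 Kc0 by (simp add: c_def)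
      have "0 < gap / (2*(c+1))" using gap c by simp
      from Dapprox[rule_format, OF f this] obtain d where d: "d \<in> D" and edlt: "Lp_norm_pow M p (\<lambda>x. f x - d x) < gap / (2*(c+1))"
        by blast
      define ed where "ed = Lp_norm_pow M p (\<lambda>x. f x - d x)"
      have ed0: "0 \<le> ed" unfolding ed_def by (rule Lp_norm_pow_nonneg)
      have dL: "d \<in> Lp_set M p" using d D by auto
      define dd where "dd = Lp_norm_pow M p d"
      have dd0: "0 \<le> dd" unfolding dd_def by (rule Lp_norm_pow_nonneg)
      have ddle: "dd \<le> P' * N + Q * ed"
        using Lp_norm_conv[OF p0(2) th(1,2) dL f] by (simp add: N_def P'_def Q_def dd_def ed_def normsym)
      define \<tau> where "\<tau> = gap / (4 * A)"
      have tau: "0 < \<tau>" using gap pos by (simp add: \<tau>_def)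
      have ev1: "eventually (\<lambda>l. weighted_E M p \<eta> T d ((1-\<theta>)*l) < ennreal (dd/(\<eta>-1) + \<tau>)) at_top"
      proof -
        have ev0: "eventually (\<lambda>l'. weighted_E M p \<eta> T d l' < ennreal (dd/(\<eta>-1) + \<tau>)) at_top"
          unfolding dd_def by (rule ev_upper[OF dlim[OF d] tau]) (use e1 in \<open>simp add: Lp_norm_pow_nonneg\<close>)
        show ?thesis using th by (intro ev_scale[OF _ ev0]) auto
      qed
      show ?thesis using ev1 eventually_gt_at_top[of 0]
      proof eventually_elim
        fix l :: real assume lt: "weighted_E M p \<eta> T d ((1-\<theta>)*l) < ennreal (dd/(\<eta>-1) + \<tau>)" and l: "0 < l"
        have "weighted_E M p \<eta> T f l \<le> ennreal A * weighted_E M p \<eta> T d ((1-\<theta>)*l) + ennreal Bt * ennreal (Kc * ed)"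
          using cmp[OF f dL th(1,2) l] by (simp add: A_def Bt_def ed_def)
        also have "\<dots> \<le> ennreal A * ennreal (dd/(\<eta>-1) + \<tau>) + ennreal Bt * ennreal (Kc * ed)"
          using lt by (intro add_right_mono mult_left_mono) auto
        also have "\<dots> = ennreal (A * (dd/(\<eta>-1) + \<tau>) + Bt * (Kc * ed))"
          using pos tau dd0 e1 Kc0 ed0 by (simp add: ennreal_mult)
        also have "\<dots> < y"
        proof -
          have ggeq: "gg \<theta> = A * (P' * N) / (\<eta>-1)" by (simp add: gg_def P'_def A_def)
          have "A * (dd/(\<eta>-1) + \<tau>) + Bt * (Kc * ed) < y'"
            by (rule arith_upper[OF pos(1) e1 c_def c ddle edlt[folded ed_def] gap \<tau>_def ggeq]) (simp add: gap_def)
          moreover have "0 < y'" using y'gt nn by linarith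
          ultimately show ?thesis unfolding y' by (intro ennreal_lessI)
        qed
        finally show "weighted_E M p \<eta> T f l < y" .
      qed
    qed
  qed
  have le_sup: "ennreal (N / (\<eta>-1)) \<le> (SUP l\<in>{0<..}. weighted_E M p \<eta> T f l)"
  proof (rule tendsto_upperbound[OF lim])
    show "eventually (\<lambda>l. weighted_E M p \<eta> T f l \<le> (SUP l\<in>{0<..}. weighted_E M p \<eta> T f l)) at_top"
      using eventually_gt_at_top[of 0] by eventually_elim (auto intro: SUP_upper)
  qed simp
  have sup_le: "(SUP l\<in>{0<..}. weighted_E M p \<eta> T f l) \<le> ennreal (C powr p / (\<eta> - 1) * Lp_norm_pow M p f)"
    using upper[OF f] by (intro SUP_least) (auto simp: Kc_def N_def)
  show ?thesis
    using lim le_sup sup_le by (intro exI[of _ "ennreal (N / (\<eta>-1))"]) (simp add: N_def)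
qed

end
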